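(* Let $k\ge2$ and let $f$ be a smooth function on $\mathcal E_k$ (depending on finitely many coordinates) such that $D^{(k)}_x(f)=D^{(k)}_y(f)=0$. Then $f$ is constant.
   Context: Let $\mathcal E_1$ be the system $u_y+vu_x=\frac1{v-u}$, $v_y+uv_x=\frac1{u-v}$ with internal coordinates $x,y,u_i=\partial^iu/\partial x^i$, $v_i=\partial^iv/\partial x^i$ ($i\ge0$) and total derivatives $D_x=\partial_x+\sum_i(u_{i+1}\partial_{u_i}+v_{i+1}\partial_{v_i})$, $D_y=\partial_y+\sum_i\big(D_x^i(\tfrac1{v-u}-vu_1)\partial_{u_i}+D_x^i(\tfrac1{u-v}-uv_1)\partial_{v_i}\big)$. Let $\sigma_m=\sum_{i+j=m}u^iv^j$, $\psi^{(1)}=y$, $\psi^{(2)}=x$, and let $\psi^{(k)}$, $k\ge3$, be new coordinates; for $k\ge2$ put $X^{(k)}=\sigma_{k-2}-\sum_{i=1}^{k-3}i\,\sigma_{k-i-3}\psi^{(i)}$ and for $k\ge3$ put $Y^{(k)}=-uv\,X^{(k-1)}-(k-2)\psi^{(k-2)}$. For $k\ge2$, $\mathcal E_k=\mathcal E_1\times\mathbb R^{k-1}$ has the additional coordinates $\psi^{(3)},\dots,\psi^{(k+1)}$ and the commuting vector fields $D^{(k)}_x=D_x+\sum_{i=3}^{k+1}X^{(i)}\partial/\partial\psi^{(i)}$, $D^{(k)}_y=D_y+\sum_{i=3}^{k+1}Y^{(i)}\partial/\partial\psi^{(i)}$. *)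

theory Defs
  imports "HOL-Analysis.Analysis"
begin

text \<open>Coordinates of the (infinite) jet space: x, y, u_i, v_i (i \<ge> 0), and the
  nonlocal coordinates psi^(j) (only j = 3..k+1 are coordinates of E_k).\<close>
datatype coord = CX | CY | CU nat | CV nat | CPsi nat

type_synonym pt = "coord \<Rightarrow> real"

definition pd :: "coord \<Rightarrow> (pt \<Rightarrow> real) \<Rightarrow> pt \<Rightarrow> real" where
  "pd c g p = deriv (\<lambda>t. g (p(c := t))) (p c)"

fun iterpd :: "coord list \<Rightarrow> (pt \<Rightarrow> real) \<Rightarrow> pt \<Rightarrow> real" where
  "iterpd [] g = g"
| "iterpd (c # cs) g = pd c (iterpd cs g)"

definition smooth_on :: "pt set \<Rightarrow> (pt \<Rightarrow> real) \<Rightarrow> bool" where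
  "smooth_on S g \<longleftrightarrow>
     (\<forall>cs. continuous_on S (iterpd cs g) \<and>
        (\<forall>c. \<forall>p\<in>S. ((\<lambda>t. iterpd cs g (p(c := t))) has_real_derivative
                        pd c (iterpd cs g) p) (at (p c))))"

definition Omega :: "pt set" where
  "Omega = {p. p (CU 0) \<noteq> p (CV 0)}"

text \<open>Total derivative D_x, with the sum truncated at M (the truncation is
  harmless once g does not depend on u_i, v_i for i \<ge> M).\<close>
definition TDx :: "nat \<Rightarrow> (pt \<Rightarrow> real) \<Rightarrow> pt \<Rightarrow> real" where
  "TDx M g p = pd CX g p +
     (\<Sum>i<M. p (CU (Suc i)) * pd (CU i) g p + p (CV (Suc i)) * pd (CV i) g p)"

definition rhsU :: "pt \<Rightarrow> real" where
  "rhsU p = 1 / (p (CV 0) - p (CU 0)) - p (CV 0) * p (CU 1)"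

definition rhsV :: "pt \<Rightarrow> real" where
  "rhsV p = 1 / (p (CU 0) - p (CV 0)) - p (CU 0) * p (CV 1)"

text \<open>Total derivative D_y; D_x^i of the right-hand sides (i < M) depend only
  on coordinates of index \<le> M, so truncation M+2 in these D_x is exact.\<close>
definition TDy :: "nat \<Rightarrow> (pt \<Rightarrow> real) \<Rightarrow> pt \<Rightarrow> real" where
  "TDy M g p = pd CY g p +
     (\<Sum>i<M. (TDx (M + 2) ^^ i) rhsU p * pd (CU i) g p
            + (TDx (M + 2) ^^ i) rhsV p * pd (CV i) g p)"

definition sigma :: "pt \<Rightarrow> nat \<Rightarrow> real" where
  "sigma p m = (\<Sum>a\<le>m. p (CU 0) ^ a * p (CV 0) ^ (m - a))"

definition psiv :: "pt \<Rightarrow> nat \<Rightarrow> real" where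
  "psiv p j = (if j = 1 then p CY else if j = 2 then p CX else p (CPsi j))"

definition Xk :: "pt \<Rightarrow> nat \<Rightarrow> real" where
  "Xk p k = sigma p (k - 2) - (\<Sum>i = 1..k - 3. real i * sigma p (k - i - 3) * psiv p i)"

definition Yk :: "pt \<Rightarrow> nat \<Rightarrow> real" where
  "Yk p k = - (p (CU 0) * p (CV 0)) * Xk p (k - 1) - real (k - 2) * psiv p (k - 2)"

definition DxK :: "nat \<Rightarrow> nat \<Rightarrow> (pt \<Rightarrow> real) \<Rightarrow> pt \<Rightarrow> real" where
  "DxK k M g p = TDx M g p + (\<Sum>i = 3..k + 1. Xk p i * pd (CPsi i) g p)"

definition DyK :: "nat \<Rightarrow> nat \<Rightarrow> (pt \<Rightarrow> real) \<Rightarrow> pt \<Rightarrow> real" where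
  "DyK k M g p = TDy M g p + (\<Sum>i = 3..k + 1. Yk p i * pd (CPsi i) g p)"

definition relevant :: "nat \<Rightarrow> nat \<Rightarrow> coord \<Rightarrow> bool" where
  "relevant k N c \<longleftrightarrow> c = CX \<or> c = CY \<or> (\<exists>i<N. c = CU i \<or> c = CV i)
      \<or> (\<exists>j. 3 \<le> j \<and> j \<le> k + 1 \<and> c = CPsi j)"

end

theory Submission imports Defs "HOL-Computational_Algebra.Polynomial" begin


lemma DER:
  assumes "smooth_on Omega f" "p(c:=t0) \<in> Omega"
  shows "((\<lambda>t. f (p(c:=t))) has_real_derivative pd c f (p(c:=t0))) (at t0)"
proof -
  have "((\<lambda>t. iterpd [] f ((p(c:=t0))(c := t))) has_real_derivative
                        pd c (iterpd [] f) (p(c:=t0))) (at ((p(c:=t0)) c))"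
    using assms unfolding smooth_on_def by blast
  then show ?thesis by simp
qed

lemma seg:
  fixes g :: "real \<Rightarrow> real"
  assumes "\<And>t. min s1 s2 \<le> t \<Longrightarrow> t \<le> max s1 s2 \<Longrightarrow> (g has_real_derivative 0) (at t)"
  shows "g s1 = g s2"
proof -
  have *: "g b = g a" if "a < b" "\<And>t. a \<le> t \<Longrightarrow> t \<le> b \<Longrightarrow> (g has_real_derivative 0) (at t)" for a b
  proof (rule DERIV_isconst_end[OF that(1)])
    show "continuous_on {a..b} g"
      using that(2) by (meson DERIV_isCont atLeastAtMost_iff continuous_at_imp_continuous_on)
  qed (use that in auto)
  show ?thesis
  proof (cases s1 s2 rule: linorder_cases)
    case less then show ?thesis using *[of s1 s2] assms by (auto simp: min_def max_def)
  next
    case greater then show ?thesis using *[of s2 s1] assms by (auto simp: min_def max_def)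
  qed simp
qed

lemma line_const:
  assumes "smooth_on Omega f" "\<forall>q\<in>Omega. pd c f q = 0"
    and "\<And>t. min s1 s2 \<le> t \<Longrightarrow> t \<le> max s1 s2 \<Longrightarrow> p(c:=t) \<in> Omega"
  shows "f (p(c:=s1)) = f (p(c:=s2))"
  using seg[of s1 s2 "\<lambda>t. f (p(c:=t))"] DER[OF assms(1)] assms(2,3) by fastforce

lemma Omega_upd: "c \<noteq> CU 0 \<Longrightarrow> c \<noteq> CV 0 \<Longrightarrow> p(c:=t) \<in> Omega \<longleftrightarrow> p \<in> Omega"
  by (simp add: Omega_def)

lemma line_const2:
  assumes "smooth_on Omega f" "\<forall>q\<in>Omega. pd c f q = 0" "c \<noteq> CU 0" "c \<noteq> CV 0" "p \<in> Omega"
  shows "f (p(c:=s)) = f p"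
proof -
  have "f (p(c:=s)) = f (p(c:= p c))"
    by (rule line_const[OF assms(1,2)]) (use assms Omega_upd in auto)
  then show ?thesis by simp
qed

lemma Omega_ev:
  assumes "p \<in> Omega"
  shows "eventually (\<lambda>t. p(c:=t) \<in> Omega) (nhds (p c))"
proof -
  consider "c = CU 0" | "c = CV 0" | "c \<noteq> CU 0 \<and> c \<noteq> CV 0" by blast
  then show ?thesis
  proof cases
    case 1
    have "eventually (\<lambda>t. t \<noteq> p (CV 0)) (nhds (p c))"
      using assms 1 by (intro t1_space_nhds) (auto simp: Omega_def)
    then show ?thesis by eventually_elim (use 1 in \<open>auto simp: Omega_def\<close>)
  next
    case 2
    have "eventually (\<lambda>t. t \<noteq> p (CU 0)) (nhds (p c))"
      using assms 2 by (intro t1_space_nhds) (auto simp: Omega_def)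
    then show ?thesis by eventually_elim (use 2 in \<open>auto simp: Omega_def\<close>)
  next
    case 3 then show ?thesis using assms by (simp add: Omega_upd)
  qed
qed

lemma pd_const:
  assumes "\<And>t. g (p(c:=t)) = g p"
  shows "pd c g p = 0"
proof -
  have "(\<lambda>t. g (p(c:=t))) = (\<lambda>t. g p)" using assms by auto
  then show ?thesis unfolding pd_def by simp
qed



lemma Xk_upd: "c \<noteq> CU 0 \<Longrightarrow> c \<noteq> CV 0 \<Longrightarrow> c \<noteq> CX \<Longrightarrow> c \<noteq> CY \<Longrightarrow> (\<And>j. c \<noteq> CPsi j) \<Longrightarrow>
   Xk (p(c:=s)) i = Xk p i"
proof -
  assume a: "c \<noteq> CU 0" "c \<noteq> CV 0" "c \<noteq> CX" "c \<noteq> CY" "\<And>j. c \<noteq> CPsi j"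
  then have "psiv (p(c:=s)) j = psiv p j" for j by (auto simp: psiv_def)
  then show ?thesis using a by (simp add: Xk_def sigma_def)
qed

lemma DxK_diff:
  assumes "c \<noteq> CU 0" "c \<noteq> CV 0" "c \<noteq> CX" "c \<noteq> CY" "\<And>j. c \<noteq> CPsi j"
    and INV: "\<And>d. pd d f (p(c:=s)) = pd d f p"
  shows "DxK k N f (p(c:=s)) = DxK k N f p +
     (\<Sum>i<N. ((p(c:=s)) (CU (Suc i)) - p (CU (Suc i))) * pd (CU i) f p
           + ((p(c:=s)) (CV (Suc i)) - p (CV (Suc i))) * pd (CV i) f p)"
  using assms
  by (simp add: DxK_def TDx_def Xk_upd INV algebra_simps sum.distrib sum_subtractf)

locale L =
  fixes k N :: nat and f :: "pt \<Rightarrow> real"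
  assumes dep: "\<forall>p q. (\<forall>c. relevant k N c \<longrightarrow> p c = q c) \<longrightarrow> f p = f q"
    and sm: "smooth_on Omega f"
    and dx: "\<forall>p\<in>Omega. DxK k N f p = 0"
    and dy: "\<forall>p\<in>Omega. DyK k N f p = 0"
begin

definition Z :: "nat \<Rightarrow> bool" where
  "Z n \<longleftrightarrow> (\<forall>p\<in>Omega. \<forall>i\<ge>n. pd (CU i) f p = 0 \<and> pd (CV i) f p = 0)"

lemma ZN: "Z N"
  unfolding Z_def
proof (intro ballI allI impI conjI)
  fix p i assume "N \<le> i"
  then have "\<not> relevant k N (CU i)" "\<not> relevant k N (CV i)" by (auto simp: relevant_def)
  then show "pd (CU i) f p = 0" "pd (CV i) f p = 0"
    by (auto intro!: pd_const dep[rule_format])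
qed

lemma INV:
  assumes "Z (Suc n)" "p \<in> Omega" "d = CU (Suc n) \<or> d = CV (Suc n)"
  shows "pd c f (p(d:=s)) = pd c f p"
proof (cases "c = d")
  case True
  then show ?thesis using assms Omega_upd[of d p s] unfolding Z_def by auto
next
  case False
  have z: "\<forall>q\<in>Omega. pd d f q = 0" using assms unfolding Z_def by auto
  have "eventually (\<lambda>t. f ((p(d:=s))(c:=t)) = f (p(c:=t))) (nhds (p c))"
    using Omega_ev[OF assms(2), of c]
  proof eventually_elim
    case (elim t)
    have "f ((p(c:=t))(d:=s)) = f (p(c:=t))"
      by (rule line_const2[OF sm z]) (use assms elim in auto)
    then show ?case using False by (simp add: fun_upd_twist)
  qed
  then show ?thesis unfolding pd_def using False by (intro deriv_cong_ev) auto
qed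

lemma Zstep:
  assumes "n < N" "Z (Suc n)"
  shows "Z n"
  unfolding Z_def
proof (intro ballI allI impI)
  fix p i assume p: "p \<in> Omega" and i: "n \<le> i"
  show "pd (CU i) f p = 0 \<and> pd (CV i) f p = 0"
  proof (cases "i = n")
    case False
    then show ?thesis using assms(2) p i unfolding Z_def by auto
  next
    case True
    let ?q = "p(CU (Suc n) := p (CU (Suc n)) + 1)"
    have q: "?q \<in> Omega" using p Omega_upd by auto
    have e1: "DxK k N f ?q = DxK k N f p +
     (\<Sum>i<N. (?q (CU (Suc i)) - p (CU (Suc i))) * pd (CU i) f p
           + (?q (CV (Suc i)) - p (CV (Suc i))) * pd (CV i) f p)"
      by (rule DxK_diff) (auto intro: INV[OF assms(2) p])
    have e2: "(\<Sum>i<N. (?q (CU (Suc i)) - p (CU (Suc i))) * pd (CU i) f p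
           + (?q (CV (Suc i)) - p (CV (Suc i))) * pd (CV i) f p)
          = (\<Sum>i<N. if i = n then pd (CU n) f p else 0)"
      by (rule sum.cong) auto
    have e3: "(\<Sum>i<N. if i = n then pd (CU n) f p else (0::real)) = pd (CU n) f p" using assms(1) by simp
    have "DxK k N f ?q = 0" "DxK k N f p = 0" using dx p q by auto
    then have 1: "pd (CU n) f p = 0" using e1 e2 e3 by linarith
    let ?r = "p(CV (Suc n) := p (CV (Suc n)) + 1)"
    have r: "?r \<in> Omega" using p Omega_upd by auto
    have e1: "DxK k N f ?r = DxK k N f p +
     (\<Sum>i<N. (?r (CU (Suc i)) - p (CU (Suc i))) * pd (CU i) f p
           + (?r (CV (Suc i)) - p (CV (Suc i))) * pd (CV i) f p)"
      by (rule DxK_diff) (auto intro: INV[OF assms(2) p])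
    have e2: "(\<Sum>i<N. (?r (CU (Suc i)) - p (CU (Suc i))) * pd (CU i) f p
           + (?r (CV (Suc i)) - p (CV (Suc i))) * pd (CV i) f p)
          = (\<Sum>i<N. if i = n then pd (CV n) f p else 0)"
      by (rule sum.cong) auto
    have e3: "(\<Sum>i<N. if i = n then pd (CV n) f p else (0::real)) = pd (CV n) f p" using assms(1) by simp
    have "DxK k N f ?r = 0" "DxK k N f p = 0" using dx p r by auto
    then have 2: "pd (CV n) f p = 0" using e1 e2 e3 by linarith
    show ?thesis using 1 2 True by simp
  qed
qed

lemma Z0: "Z 0"
proof -
  have "Z (N - j)" for j
  proof (induction j)
    case 0 then show ?case using ZN by simp
  next
    case (Suc j)
    show ?case
    proof (cases "j < N")
      case True
      then have "Suc (N - Suc j) = N - j" by simp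
      then show ?thesis using Zstep[of "N - Suc j"] Suc True by simp
    next
      case False then show ?thesis using Suc by simp
    qed
  qed
  from this[of N] show ?thesis by simp
qed

lemma pdU: "p \<in> Omega \<Longrightarrow> pd (CU i) f p = 0" and pdV: "p \<in> Omega \<Longrightarrow> pd (CV i) f p = 0"
  using Z0 unfolding Z_def by auto

end


definition Pp :: "(nat \<Rightarrow> real) \<Rightarrow> nat \<Rightarrow> real poly" where
  "Pp \<psi> i = monom 1 (i - 2) - (\<Sum>j = 1..i - 3. smult (real j * \<psi> j) (monom 1 (i - j - 3)))"

lemma poly_Pp: "poly (Pp \<psi> i) t = t ^ (i - 2) - (\<Sum>j = 1..i - 3. real j * t ^ (i - j - 3) * \<psi> j)"
  by (simp add: Pp_def poly_sum poly_monom mult_ac)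

lemma coeff_Pp:
  assumes "3 \<le> i" "i - 2 \<le> n"
  shows "coeff (Pp \<psi> i) n = (if n = i - 2 then 1 else 0)"
proof -
  have "coeff (smult (real j * \<psi> j) (monom 1 (i - j - 3))) n = 0" if "j \<in> {1..i-3}" for j
    using that assms by auto
  then have "coeff (\<Sum>j = 1..i - 3. smult (real j * \<psi> j) (monom 1 (i - j - 3))) n = 0"
    unfolding coeff_sum by (intro sum.neutral) blast
  then show ?thesis by (simp add: Pp_def coeff_diff)
qed

lemma polyfact:
  fixes a \<psi> :: "nat \<Rightarrow> real" and b :: real
  assumes T: "infinite T"
    and H: "\<forall>t\<in>T. b + (\<Sum>i=3..K. (t ^ (i - 2) - (\<Sum>j = 1..i - 3. real j * t ^ (i - j - 3) * \<psi> j)) * a i) = 0"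
  shows "b = 0 \<and> (\<forall>i\<in>{3..K}. a i = 0)"
proof -
  define Q where "Q = [:b:] + (\<Sum>i=3..K. smult (a i) (Pp \<psi> i))"
  have "poly Q t = b + (\<Sum>i=3..K. (t ^ (i - 2) - (\<Sum>j = 1..i - 3. real j * t ^ (i - j - 3) * \<psi> j)) * a i)" for t
    by (simp add: Q_def poly_sum poly_Pp mult_ac)
  then have "T \<subseteq> {t. poly Q t = 0}" using H by auto
  then have "Q = 0" using poly_roots_finite T finite_subset by blast
  then have c: "coeff Q n = 0" for n by simp
  have A: "\<forall>i. 3 \<le> i \<longrightarrow> i \<le> K \<longrightarrow> K - d \<le> i \<longrightarrow> a i = 0" for d
  proof (induction d)
    case 0 then show ?case
    proof (intro allI impI)
      fix i assume i: "3 \<le> i" "i \<le> K" "K - 0 \<le> i"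
      then have "i = K" by simp
      have "coeff Q (i - 2) = (\<Sum>i'=3..K. a i' * coeff (Pp \<psi> i') (i - 2))"
        using i by (simp add: Q_def coeff_sum coeff_pCons split: nat.split)
      also have "\<dots> = (\<Sum>i'=3..K. if i' = i then a i else 0)"
        by (rule sum.cong) (use i in \<open>auto simp: coeff_Pp split: if_splits\<close>)
      also have "\<dots> = a i" using i by simp
      finally show "a i = 0" using c by simp
    qed
  next
    case (Suc d) then show ?case
    proof (intro allI impI)
      fix i assume i: "3 \<le> i" "i \<le> K" "K - Suc d \<le> i"
      show "a i = 0"
      proof (cases "K - d \<le> i")
        case True then show ?thesis using Suc i by blast
      next
        case False
        then have ii: "i + 1 = K - d" using i by linarith
        have "coeff Q (i - 2) = (\<Sum>i'=3..K. a i' * coeff (Pp \<psi> i') (i - 2))"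
          using i by (simp add: Q_def coeff_sum coeff_pCons split: nat.split)
        also have "\<dots> = (\<Sum>i'=3..K. if i' = i then a i else 0)"
        proof (rule sum.cong)
          fix i' assume i': "i' \<in> {3..K}"
          show "a i' * coeff (Pp \<psi> i') (i - 2) = (if i' = i then a i else 0)"
          proof (cases "i' \<le> i")
            case True then show ?thesis using i i' by (auto simp: coeff_Pp split: if_splits)
          next
            case False then have "a i' = 0" using Suc i' ii by auto
            then show ?thesis using False by auto
          qed
        qed simp
        also have "\<dots> = a i" using i by simp
        finally show "a i = 0" using c by simp
      qed
    qed
  qed
  have ai: "\<forall>i\<in>{3..K}. a i = 0" using A[of K] by auto
  have "coeff Q 0 = b + (\<Sum>i'=3..K. a i' * coeff (Pp \<psi> i') 0)"
    by (simp add: Q_def coeff_sum)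
  also have "\<dots> = b" using ai by simp
  finally have "b = 0" using c by simp
  then show ?thesis using ai by simp
qed



lemma path2:
  fixes h :: "real \<Rightarrow> real \<Rightarrow> real"
  assumes hx: "\<And>x y. x < y \<Longrightarrow> ((\<lambda>t. h t y) has_real_derivative 0) (at x)"
    and hy: "\<And>x y. x < y \<Longrightarrow> ((\<lambda>t. h x t) has_real_derivative 0) (at y)"
    and ab: "a < b" "a' < b'"
  shows "h a b = h a' b'"
proof -
  define m where "m = min a a'"
  have "h a b = h m b"
    by (rule seg[of a m "\<lambda>t. h t b"]) (use ab in \<open>auto intro!: hx simp: m_def\<close>)
  also have "\<dots> = h m b'"
    by (rule seg[of b b' "\<lambda>t. h m t"]) (use ab in \<open>auto intro!: hy simp: m_def\<close>)
  also have "\<dots> = h a' b'"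
    by (rule seg[of m a' "\<lambda>t. h t b'"]) (use ab in \<open>auto intro!: hx simp: m_def\<close>)
  finally show ?thesis .
qed

context L begin

lemma uv_move:
  assumes p: "p \<in> Omega" and ab: "a \<noteq> b" "a < b \<longleftrightarrow> p (CU 0) < p (CV 0)"
  shows "f (p(CU 0 := a, CV 0 := b)) = f p"
proof (cases "p (CU 0) < p (CV 0)")
  case True
  define h where "h x y = f (p(CU 0 := x, CV 0 := y))" for x y
  have "h a b = h (p (CU 0)) (p (CV 0))"
  proof (rule path2[where h=h])
    fix x y :: real assume xy: "x < y"
    have "((\<lambda>t. f ((p(CV 0 := y))(CU 0 := t))) has_real_derivative pd (CU 0) f ((p(CV 0 := y))(CU 0 := x))) (at x)"
      by (rule DER[OF sm]) (use xy in \<open>auto simp: Omega_def\<close>)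
    moreover have "pd (CU 0) f ((p(CV 0 := y))(CU 0 := x)) = 0"
      by (rule pdU) (use xy in \<open>auto simp: Omega_def\<close>)
    ultimately show "((\<lambda>t. h t y) has_real_derivative 0) (at x)"
      unfolding h_def by (simp add: fun_upd_twist)
  next
    fix x y :: real assume xy: "x < y"
    have "((\<lambda>t. f ((p(CU 0 := x))(CV 0 := t))) has_real_derivative pd (CV 0) f ((p(CU 0 := x))(CV 0 := y))) (at y)"
      by (rule DER[OF sm]) (use xy in \<open>auto simp: Omega_def\<close>)
    moreover have "pd (CV 0) f ((p(CU 0 := x))(CV 0 := y)) = 0"
      by (rule pdV) (use xy in \<open>auto simp: Omega_def\<close>)
    ultimately show "((\<lambda>t. h x t) has_real_derivative 0) (at y)"
      unfolding h_def by simp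
  qed (use ab True in auto)
  then show ?thesis by (simp add: h_def)
next
  case False
  then have pl: "p (CV 0) < p (CU 0)" using p by (auto simp: Omega_def)
  define h where "h y x = f (p(CU 0 := x, CV 0 := y))" for x y
  have "h b a = h (p (CV 0)) (p (CU 0))"
  proof (rule path2[where h=h])
    fix x y :: real assume xy: "x < y"
    have "((\<lambda>t. f ((p(CU 0 := y))(CV 0 := t))) has_real_derivative pd (CV 0) f ((p(CU 0 := y))(CV 0 := x))) (at x)"
      by (rule DER[OF sm]) (use xy in \<open>auto simp: Omega_def\<close>)
    moreover have "pd (CV 0) f ((p(CU 0 := y))(CV 0 := x)) = 0"
      by (rule pdV) (use xy in \<open>auto simp: Omega_def\<close>)
    ultimately show "((\<lambda>t. h t y) has_real_derivative 0) (at x)"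
      unfolding h_def by simp
  next
    fix x y :: real assume xy: "x < y"
    have "((\<lambda>t. f ((p(CV 0 := x))(CU 0 := t))) has_real_derivative pd (CU 0) f ((p(CV 0 := x))(CU 0 := y))) (at y)"
      by (rule DER[OF sm]) (use xy in \<open>auto simp: Omega_def\<close>)
    moreover have "pd (CU 0) f ((p(CV 0 := x))(CU 0 := y)) = 0"
      by (rule pdU) (use xy in \<open>auto simp: Omega_def\<close>)
    ultimately show "((\<lambda>t. h x t) has_real_derivative 0) (at y)"
      unfolding h_def by (simp add: fun_upd_twist)
  qed (use ab False pl in auto)
  then show ?thesis by (simp add: h_def)
qed

lemma sigma0: "sigma (p(CU 0 := t, CV 0 := 0)) m = t ^ m"
proof -
  have "sigma (p(CU 0 := t, CV 0 := 0)) m = (\<Sum>a\<le>m. if a = m then t ^ m else 0)"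
    unfolding sigma_def by (rule sum.cong) auto
  then show ?thesis by simp
qed

lemma psi_stage:
  assumes p: "p \<in> Omega"
  shows "pd CX f p = 0 \<and> (\<forall>i\<in>{3..k+1}. pd (CPsi i) f p = 0)"
proof -
  define T where "T = (if p (CU 0) < p (CV 0) then {..<0::real} else {0<..})"
  have T: "infinite T" unfolding T_def using infinite_Iio infinite_Ioi by auto
  have "\<forall>t\<in>T. pd CX f p + (\<Sum>i=3..k+1. (t ^ (i - 2) - (\<Sum>j = 1..i - 3. real j * t ^ (i - j - 3) * psiv p j)) * pd (CPsi i) f p) = 0"
  proof
    fix t assume t: "t \<in> T"
    define q where "q = p(CU 0 := t, CV 0 := 0)"
    have tc: "t \<noteq> 0" "t < 0 \<longleftrightarrow> p (CU 0) < p (CV 0)" using t p by (auto simp: T_def Omega_def split: if_splits)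
    have q: "q \<in> Omega" using tc by (simp add: q_def Omega_def)
    have same: "pd c f q = pd c f p" if "c \<noteq> CU 0" "c \<noteq> CV 0" for c
    proof -
      have "f (q(c:=s)) = f (p(c:=s))" for s
      proof -
        have "q(c:=s) = (p(c:=s))(CU 0 := t, CV 0 := 0)" using that by (auto simp: q_def fun_upd_twist)
        moreover have "f ((p(c:=s))(CU 0 := t, CV 0 := 0)) = f (p(c:=s))"
          by (rule uv_move) (use that p tc in \<open>auto simp: Omega_def\<close>)
        ultimately show ?thesis by simp
      qed
      moreover have "q c = p c" using that by (simp add: q_def)
      ultimately show ?thesis unfolding pd_def by simp
    qed
    have ps: "psiv q j = psiv p j" for j by (simp add: psiv_def q_def)
    have X: "Xk q i = t ^ (i - 2) - (\<Sum>j = 1..i - 3. real j * t ^ (i - j - 3) * psiv p j)" for i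
      unfolding Xk_def q_def sigma0 using ps[unfolded q_def] by simp
    have "DxK k N f q = pd CX f p + (\<Sum>i=3..k+1. (t ^ (i - 2) - (\<Sum>j = 1..i - 3. real j * t ^ (i - j - 3) * psiv p j)) * pd (CPsi i) f p)"
      unfolding DxK_def TDx_def using q by (simp add: pdU pdV X same)
    then show "pd CX f p + (\<Sum>i=3..k+1. (t ^ (i - 2) - (\<Sum>j = 1..i - 3. real j * t ^ (i - j - 3) * psiv p j)) * pd (CPsi i) f p) = 0"
      using dx q by simp
  qed
  from polyfact[OF T this] show ?thesis by simp
qed

lemma pdY: assumes p: "p \<in> Omega" shows "pd CY f p = 0"
proof -
  have "(\<Sum>i = 3..k + 1. Yk p i * pd (CPsi i) f p) = 0"
    using psi_stage[OF p] by (intro sum.neutral) auto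
  moreover have "TDy N f p = pd CY f p" using p by (simp add: TDy_def pdU pdV)
  ultimately show ?thesis using dy p unfolding DyK_def by auto
qed

end


context L begin

lemma ov_lemma:
  assumes p: "p \<in> Omega"
    and "\<forall>c\<in>set cs. c \<noteq> CU 0 \<and> c \<noteq> CV 0 \<and> (\<forall>r\<in>Omega. pd c f r = 0)"
  shows "f (\<lambda>c. if c \<in> set cs then q c else p c) = f p \<and> (\<lambda>c. if c \<in> set cs then q c else p c) \<in> Omega"
  using assms(2)
proof (induction cs)
  case Nil then show ?case using p by simp
next
  case (Cons c cs)
  let ?r = "\<lambda>d. if d \<in> set cs then q d else p d"
  have e: "(\<lambda>d. if d \<in> set (c # cs) then q d else p d) = ?r(c := q c)" by auto
  have IH: "f ?r = f p" "?r \<in> Omega" using Cons by auto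
  have "f (?r(c := q c)) = f ?r"
    by (rule line_const2[OF sm]) (use Cons IH in auto)
  moreover have "?r(c := q c) \<in> Omega" using IH Cons Omega_upd[of c ?r "q c"] by auto
  ultimately show ?case using IH e by simp
qed

lemma final:
  assumes p: "p \<in> Omega" and q: "q \<in> Omega" and s: "p (CU 0) < p (CV 0) \<longleftrightarrow> q (CU 0) < q (CV 0)"
  shows "f p = f q"
proof -
  define cs where "cs = [CX, CY] @ map CU [1..<N] @ map CV [1..<N] @ map CPsi [3..<k+2]"
  have "\<forall>c\<in>set cs. c \<noteq> CU 0 \<and> c \<noteq> CV 0 \<and> (\<forall>r\<in>Omega. pd c f r = 0)"
    unfolding cs_def using psi_stage pdY pdU pdV by auto
  from ov_lemma[OF p this, of q]
  obtain r where r: "r = (\<lambda>c. if c \<in> set cs then q c else p c)" "f r = f p" "r \<in> Omega" by blast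
  have ru: "r (CU 0) = p (CU 0)" "r (CV 0) = p (CV 0)" using r(1) unfolding cs_def by auto
  have "f (r(CU 0 := q (CU 0), CV 0 := q (CV 0))) = f r"
    by (rule uv_move) (use r(3) ru s q in \<open>auto simp: Omega_def\<close>)
  moreover have "f (r(CU 0 := q (CU 0), CV 0 := q (CV 0))) = f q"
  proof -
    have "\<forall>c. relevant k N c \<longrightarrow> (r(CU 0 := q (CU 0), CV 0 := q (CV 0))) c = q c"
    proof (intro allI impI)
    fix c assume "relevant k N c"
    then have "c \<in> set cs \<or> c = CU 0 \<or> c = CV 0"
      unfolding relevant_def cs_def by (auto simp: Suc_le_eq intro: gr0I)
    then show "(r(CU 0 := q (CU 0), CV 0 := q (CV 0))) c = q c" using r(1) by auto
    qed
    then show ?thesis using dep by blast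
  qed
  ultimately show ?thesis using r(2) by simp
qed

end

theorem mainTheorem6:
  fixes k N :: nat and f :: "pt \<Rightarrow> real"
  assumes "k \<ge> 2"
    and "\<forall>p q. (\<forall>c. relevant k N c \<longrightarrow> p c = q c) \<longrightarrow> f p = f q"
    and "smooth_on Omega f"
    and "\<forall>p\<in>Omega. DxK k N f p = 0"
    and "\<forall>p\<in>Omega. DyK k N f p = 0"
  shows "\<forall>p\<in>Omega. \<forall>q\<in>Omega.
           (p (CU 0) < p (CV 0) \<longleftrightarrow> q (CU 0) < q (CV 0)) \<longrightarrow> f p = f q"
proof -
  interpret L k N f using assms(2-5) by unfold_locales
  show ?thesis using final by blast
qed


end
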